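(* Fix $n\ge2$ and a value $W$ of the fuzzy size. Among all fuzzy graphs $\Gamma$ on $n$ vertices with $\mathrm{ew}(\Gamma)=W$, the ones maximizing $\sigma^*(\Gamma)$ are precisely the fuzzy single-edge graphs: those consisting of one fuzzy edge of membership $W$ and $n-2$ isolated vertices (all other edge memberships zero).
   Context: A fuzzy graph $\Gamma=(V,\nu,\mu)$ consists of a finite vertex set $V$ with $|V|=n$, a map $\nu:V\to[0,1]$, and a symmetric map $\mu:V\times V\to[0,1]$ with $\mu(u,v)\le\min(\nu(u),\nu(v))$. The fuzzy degree is $d_\Gamma(v)=\sum_{u\ne v}\mu(v,u)$, the fuzzy size is $\mathrm{ew}(\Gamma)=\sum_{\{u,v\},u\ne v}\mu(u,v)$, $\lambda=2\,\mathrm{ew}(\Gamma)/n$, and the fuzzy sigma index is $\sigma^*(\Gamma)=\frac1n\sum_{v}(d_\Gamma(v)-\lambda)^2$. *)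

theory Defs
  imports Complex_Main
begin

definition fuzzy_graph :: "'a set \<Rightarrow> ('a \<Rightarrow> real) \<Rightarrow> ('a \<Rightarrow> 'a \<Rightarrow> real) \<Rightarrow> bool" where
  "fuzzy_graph V \<nu> \<mu> \<longleftrightarrow>
     (\<forall>v\<in>V. 0 \<le> \<nu> v \<and> \<nu> v \<le> 1) \<and>
     (\<forall>u\<in>V. \<forall>v\<in>V. 0 \<le> \<mu> u v \<and> \<mu> u v \<le> 1 \<and> \<mu> u v = \<mu> v u \<and>
        \<mu> u v \<le> min (\<nu> u) (\<nu> v))"

definition fdeg :: "'a set \<Rightarrow> ('a \<Rightarrow> 'a \<Rightarrow> real) \<Rightarrow> 'a \<Rightarrow> real" where
  "fdeg V \<mu> v = (\<Sum>u\<in>V - {v}. \<mu> v u)"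

text \<open>Fuzzy size: sum over unordered pairs {u,v}, u \<noteq> v, of mu u v.  Since mu is
  symmetric this is half the sum over ordered pairs of distinct vertices.\<close>
definition fsize :: "'a set \<Rightarrow> ('a \<Rightarrow> 'a \<Rightarrow> real) \<Rightarrow> real" where
  "fsize V \<mu> = (\<Sum>u\<in>V. \<Sum>v\<in>V - {u}. \<mu> u v) / 2"

definition flambda :: "'a set \<Rightarrow> ('a \<Rightarrow> 'a \<Rightarrow> real) \<Rightarrow> real" where
  "flambda V \<mu> = 2 * fsize V \<mu> / real (card V)"

definition fsigma :: "'a set \<Rightarrow> ('a \<Rightarrow> 'a \<Rightarrow> real) \<Rightarrow> real" where
  "fsigma V \<mu> = (\<Sum>v\<in>V. (fdeg V \<mu> v - flambda V \<mu>)\<^sup>2) / real (card V)"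

definition single_edge :: "'a set \<Rightarrow> ('a \<Rightarrow> 'a \<Rightarrow> real) \<Rightarrow> real \<Rightarrow> bool" where
  "single_edge V \<mu> W \<longleftrightarrow>
     (\<exists>a\<in>V. \<exists>b\<in>V. a \<noteq> b \<and> \<mu> a b = W \<and>
        (\<forall>u\<in>V. \<forall>v\<in>V. u \<noteq> v \<and> {u, v} \<noteq> {a, b} \<longrightarrow> \<mu> u v = 0))"

end

theory Submission
  imports Defs
begin

definition symnn :: "'a set \<Rightarrow> ('a \<Rightarrow> 'a \<Rightarrow> real) \<Rightarrow> bool" where
  "symnn V \<mu> \<longleftrightarrow> (\<forall>u\<in>V. \<forall>v\<in>V. 0 \<le> \<mu> u v \<and> \<mu> u v = \<mu> v u)"

lemma fg_symnn: "fuzzy_graph V \<nu> \<mu> \<Longrightarrow> symnn V \<mu>"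
  unfolding fuzzy_graph_def symnn_def by blast

lemma sum_deg: "(\<Sum>v\<in>V. fdeg V \<mu> v) = 2 * fsize V \<mu>"
  unfolding fdeg_def fsize_def by simp

lemma deg_nonneg: "symnn V \<mu> \<Longrightarrow> v \<in> V \<Longrightarrow> 0 \<le> fdeg V \<mu> v"
  unfolding fdeg_def symnn_def by (auto intro!: sum_nonneg)

lemma deg_ge_edge: "finite V \<Longrightarrow> symnn V \<mu> \<Longrightarrow> v \<in> V \<Longrightarrow> u \<in> V \<Longrightarrow> u \<noteq> v
  \<Longrightarrow> \<mu> v u \<le> fdeg V \<mu> v"
  unfolding fdeg_def symnn_def
  by (rule member_le_sum) auto

lemma deg_le: assumes "finite V" "symnn V \<mu>" "v \<in> V"
  shows "fdeg V \<mu> v \<le> fsize V \<mu>"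
proof -
  have "(\<Sum>x\<in>V. fdeg V \<mu> x) = fdeg V \<mu> v + (\<Sum>x\<in>V-{v}. fdeg V \<mu> x)"
    using assms by (simp add: sum.remove)
  moreover have "(\<Sum>x\<in>V-{v}. fdeg V \<mu> x) \<ge> (\<Sum>x\<in>V-{v}. \<mu> x v)"
    using assms by (intro sum_mono deg_ge_edge) auto
  moreover have "(\<Sum>x\<in>V-{v}. \<mu> x v) = fdeg V \<mu> v"
    unfolding fdeg_def using assms unfolding symnn_def by (intro sum.cong) auto
  ultimately show ?thesis using sum_deg[of V \<mu>] by linarith
qed

lemma sq_le: assumes "finite V" "symnn V \<mu>"
  shows "(\<Sum>v\<in>V. (fdeg V \<mu> v)\<^sup>2) \<le> 2 * (fsize V \<mu>)\<^sup>2"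
proof -
  have "(\<Sum>v\<in>V. (fdeg V \<mu> v)\<^sup>2) \<le> (\<Sum>v\<in>V. fdeg V \<mu> v * fsize V \<mu>)"
    using assms by (intro sum_mono, simp only: power2_eq_square, intro mult_left_mono deg_le deg_nonneg) auto
  also have "\<dots> = 2 * (fsize V \<mu>)\<^sup>2"
    by (simp add: sum_distrib_right[symmetric] sum_deg power2_eq_square)
  finally show ?thesis .
qed

lemma sigma_eq: assumes "finite V" "card V > 0"
  shows "fsigma V \<mu> = ((\<Sum>v\<in>V. (fdeg V \<mu> v)\<^sup>2) - 4 * (fsize V \<mu>)\<^sup>2 / card V) / card V"
proof -
  let ?l = "flambda V \<mu>"
  have "(\<Sum>v\<in>V. (fdeg V \<mu> v - ?l)\<^sup>2)
      = (\<Sum>v\<in>V. (fdeg V \<mu> v)\<^sup>2) - 2 * ?l * (\<Sum>v\<in>V. fdeg V \<mu> v) + card V * ?l\<^sup>2"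
    by (simp add: power2_diff sum.distrib sum_subtractf sum_distrib_left mult_ac)
  also have "\<dots> = (\<Sum>v\<in>V. (fdeg V \<mu> v)\<^sup>2) - 4 * (fsize V \<mu>)\<^sup>2 / card V"
    using assms unfolding sum_deg flambda_def by (simp add: field_simps power2_eq_square)
  finally show ?thesis unfolding fsigma_def by simp
qed

lemma eq_single: assumes "finite V" "symnn V \<mu>" "card V \<ge> 2"
  and eq: "(\<Sum>v\<in>V. (fdeg V \<mu> v)\<^sup>2) = 2 * (fsize V \<mu>)\<^sup>2"
  shows "single_edge V \<mu> (fsize V \<mu>)"
proof -
  define W where "W = fsize V \<mu>"
  define D where "D = fdeg V \<mu>"
  have Dnn: "\<And>v. v \<in> V \<Longrightarrow> 0 \<le> D v" unfolding D_def using deg_nonneg[OF assms(2)] by blast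
  have DW: "\<And>v. v \<in> V \<Longrightarrow> D v \<le> W" unfolding D_def W_def using deg_le[OF assms(1,2)] by blast
  have "(\<Sum>v\<in>V. D v * (W - D v)) = W * (\<Sum>v\<in>V. D v) - (\<Sum>v\<in>V. (D v)\<^sup>2)"
    by (simp add: algebra_simps sum_subtractf sum_distrib_left power2_eq_square)
  also have "\<dots> = 0" using eq sum_deg[of V \<mu>] unfolding D_def W_def
    by (simp add: power2_eq_square)
  finally have s0: "(\<Sum>v\<in>V. D v * (W - D v)) = 0" .
  have "\<forall>v\<in>V. 0 \<le> D v * (W - D v)" using Dnn DW by simp
  hence "\<forall>v\<in>V. D v * (W - D v) = 0"
    using sum_nonneg_eq_0_iff[OF assms(1), of "\<lambda>v. D v * (W - D v)"] s0 by simp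
  hence D01: "\<And>v. v \<in> V \<Longrightarrow> D v = 0 \<or> D v = W" by auto
  have ge: "\<And>u v. u \<in> V \<Longrightarrow> v \<in> V \<Longrightarrow> u \<noteq> v \<Longrightarrow> \<mu> u v \<le> D u"
    unfolding D_def using deg_ge_edge[OF assms(1,2)] by blast
  have nn: "\<And>u v. u \<in> V \<Longrightarrow> v \<in> V \<Longrightarrow> 0 \<le> \<mu> u v" and sy: "\<And>u v. u \<in> V \<Longrightarrow> v \<in> V \<Longrightarrow> \<mu> u v = \<mu> v u"
    using assms(2) unfolding symnn_def by auto
  show ?thesis
  proof (cases "W = 0")
    case True
    have z: "\<mu> u v = 0" if "u \<in> V" "v \<in> V" "u \<noteq> v" for u v
      using ge[of u v] nn[of u v] DW[of u] True that by linarith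
    obtain a b where "a \<in> V" "b \<in> V" "a \<noteq> b"
      using assms(1,3) card_le_Suc0_iff_eq[of V] by force
    then show ?thesis unfolding single_edge_def W_def[symmetric] using z True by blast
  next
    case False
    have "(\<Sum>v\<in>V. D v) = 2 * W" unfolding D_def W_def by (rule sum_deg)
    have "\<exists>a\<in>V. D a \<noteq> 0"
    proof (rule ccontr)
      assume "\<not> (\<exists>a\<in>V. D a \<noteq> 0)"
      hence "(\<Sum>v\<in>V. D v) = 0" by simp
      thus False using \<open>(\<Sum>v\<in>V. D v) = 2 * W\<close> False by simp
    qed
    then obtain a where a: "a \<in> V" "D a \<noteq> 0" by blast
    have "\<exists>b\<in>V - {a}. \<mu> a b \<noteq> 0"
    proof (rule ccontr)
      assume "\<not> (\<exists>b\<in>V - {a}. \<mu> a b \<noteq> 0)"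
      hence "D a = 0" unfolding D_def fdeg_def by simp
      thus False using a by simp
    qed
    then obtain b where b: "b \<in> V - {a}" "\<mu> a b \<noteq> 0" by blast
    have "D a > 0" using Dnn[of a] a by (simp add: less_le)
    hence Wpos: "W > 0" using DW[of a] a by linarith
    have Da: "D a = W" using D01 a by auto
    have mab: "\<mu> a b > 0" using b nn a by (simp add: order_neq_le_trans)
    have Db: "D b = W" using D01[of b] ge[of b a] sy[of a b] mab a b by auto
    have key: "\<mu> u v = 0" if uv: "u \<in> V" "v \<in> V" "u \<noteq> v" "u \<notin> {a,b}" for u v
    proof (rule ccontr)
      assume "\<mu> u v \<noteq> 0"
      hence "\<mu> u v > 0" using nn uv by (simp add: order_neq_le_trans)
      hence Du: "D u = W" using D01[of u] ge[of u v] uv by auto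
      have "(\<Sum>x\<in>{a,b,u}. D x) \<le> (\<Sum>x\<in>V. D x)"
        using a b uv Dnn assms(1) by (intro sum_mono2) auto
      moreover have "(\<Sum>x\<in>{a,b,u}. D x) = D a + D b + D u" 
      proof -
        have "a \<noteq> b" "a \<noteq> u" "b \<noteq> u" using b uv by auto
        thus ?thesis by (simp add: add.assoc)
      qed
      moreover have "D a + D b + D u = 3 * W" using Da Db Du by simp
      ultimately show False using \<open>(\<Sum>v\<in>V. D v) = 2 * W\<close> Wpos by linarith
    qed
    have z: "\<mu> u v = 0" if uv: "u \<in> V" "v \<in> V" "u \<noteq> v" "{u,v} \<noteq> {a,b}" for u v
    proof (cases "u \<in> {a,b}")
      case False thus ?thesis using key uv by blast
    next
      case True
      hence "v \<notin> {a,b}" using uv b by auto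
      thus ?thesis using key[of v u] uv sy by auto
    qed
    have "D a = \<mu> a b + (\<Sum>x\<in>V-{a}-{b}. \<mu> a x)"
      unfolding D_def fdeg_def using b assms(1) sum.remove[of "V-{a}" b "\<mu> a"] by simp
    also have "(\<Sum>x\<in>V-{a}-{b}. \<mu> a x) = 0"
      using z a b by (intro sum.neutral) (auto simp: doubleton_eq_iff)
    finally have "\<mu> a b = W" using Da by simp
    moreover have "a \<noteq> b" "b \<in> V" using b by auto
    moreover have "\<forall>u\<in>V. \<forall>v\<in>V. u \<noteq> v \<and> {u,v} \<noteq> {a,b} \<longrightarrow> \<mu> u v = 0" using z by blast
    ultimately show ?thesis unfolding single_edge_def W_def[symmetric] using a(1) by blast
  qed
qed

lemma single_sq: assumes "finite V" "single_edge V \<mu> W" "symnn V \<mu>"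
  shows "(\<Sum>v\<in>V. (fdeg V \<mu> v)\<^sup>2) = 2 * W\<^sup>2" and "fsize V \<mu> = W"
proof -
  obtain a b where ab: "a \<in> V" "b \<in> V" "a \<noteq> b" "\<mu> a b = W"
    and z: "\<And>u v. u \<in> V \<Longrightarrow> v \<in> V \<Longrightarrow> u \<noteq> v \<Longrightarrow> {u, v} \<noteq> {a, b} \<Longrightarrow> \<mu> u v = 0"
    using assms(2) unfolding single_edge_def by blast
  have I: "V \<inter> {v. v = a \<or> v = b} = {a,b}" "V \<inter> {a,b} = {a,b}" using ab by auto
  have sy: "\<mu> b a = W" using assms(3) ab unfolding symnn_def by auto
  have deg: "fdeg V \<mu> v = (if v = a \<or> v = b then W else 0)" if v: "v \<in> V" for v
  proof -
    consider "v = a" | "v = b" | "v \<noteq> a" "v \<noteq> b" by blast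
    then show ?thesis
    proof cases
      case 1
      have "fdeg V \<mu> v = \<mu> a b + (\<Sum>x\<in>V-{a}-{b}. \<mu> a x)"
        unfolding fdeg_def 1 using ab assms(1) sum.remove[of "V-{a}" b "\<mu> a"] by simp
      also have "(\<Sum>x\<in>V-{a}-{b}. \<mu> a x) = 0"
        using z ab by (intro sum.neutral) (auto simp: doubleton_eq_iff)
      finally show ?thesis using ab 1 by simp
    next
      case 2
      have "fdeg V \<mu> v = \<mu> b a + (\<Sum>x\<in>V-{b}-{a}. \<mu> b x)"
        unfolding fdeg_def 2 using ab assms(1) sum.remove[of "V-{b}" a "\<mu> b"] by simp
      also have "(\<Sum>x\<in>V-{b}-{a}. \<mu> b x) = 0"
        using z ab by (intro sum.neutral) (auto simp: doubleton_eq_iff)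
      finally show ?thesis using sy 2 by simp
    next
      case 3
      have "fdeg V \<mu> v = 0" unfolding fdeg_def
        using z v 3 by (intro sum.neutral) (auto simp: doubleton_eq_iff)
      thus ?thesis using 3 by simp
    qed
  qed
  have "(\<Sum>v\<in>V. (fdeg V \<mu> v)\<^sup>2) = (\<Sum>v\<in>V. if v \<in> {a,b} then W\<^sup>2 else 0)"
    using deg by (intro sum.cong) auto
  also have "\<dots> = (\<Sum>v\<in>{a,b}. W\<^sup>2)" using ab assms(1) by (simp add: sum.If_cases I)
  also have "\<dots> = 2 * W\<^sup>2" using ab by simp
  finally show "(\<Sum>v\<in>V. (fdeg V \<mu> v)\<^sup>2) = 2 * W\<^sup>2" .
  have "(\<Sum>v\<in>V. fdeg V \<mu> v) = (\<Sum>v\<in>V. if v \<in> {a,b} then W else 0)"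
    using deg by (intro sum.cong) auto
  also have "\<dots> = (\<Sum>v\<in>{a,b}. W)" using ab assms(1) by (simp add: sum.If_cases I)
  also have "\<dots> = 2 * W" using ab by simp
  finally show "fsize V \<mu> = W" using sum_deg[of V \<mu>] by simp
qed

theorem corollary3p3:
  fixes V :: "'a set" and n :: nat and W :: real
    and \<nu> :: "'a \<Rightarrow> real" and \<mu> :: "'a \<Rightarrow> 'a \<Rightarrow> real"
  assumes "finite V" and "card V = n" and "n \<ge> 2"
    and "0 \<le> W" and "W \<le> 1"
    and "fuzzy_graph V \<nu> \<mu>" and "fsize V \<mu> = W"
  shows "(\<forall>\<nu>' \<mu>'. fuzzy_graph V \<nu>' \<mu>' \<and> fsize V \<mu>' = W \<longrightarrow> fsigma V \<mu>' \<le> fsigma V \<mu>)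
         \<longleftrightarrow> single_edge V \<mu> W"
proof -
  have cpos: "card V > 0" using assms by simp
  have S: "symnn V \<mu>" using assms fg_symnn by blast
  have cmp: "fsigma V \<mu>' \<le> fsigma V \<mu> \<longleftrightarrow>
      (\<Sum>v\<in>V. (fdeg V \<mu>' v)\<^sup>2) \<le> (\<Sum>v\<in>V. (fdeg V \<mu> v)\<^sup>2)"
    if "fsize V \<mu>' = W" for \<mu>'
  proof -
    have r: "real (card V) > 0" using cpos by simp
    show ?thesis unfolding sigma_eq[OF assms(1) cpos] that assms(7)
      using divide_le_cancel[of _ "real (card V)"] r by simp
  qed
  show ?thesis
  proof
    assume H: "\<forall>\<nu>' \<mu>'. fuzzy_graph V \<nu>' \<mu>' \<and> fsize V \<mu>' = W \<longrightarrow> fsigma V \<mu>' \<le> fsigma V \<mu>"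
    obtain a b where ab: "a \<in> V" "b \<in> V" "a \<noteq> b"
      using assms(1,2,3) card_le_Suc0_iff_eq[of V] by force
    define m where "m = (\<lambda>u v. if {u,v} = {a,b} then W else (0::real))"
    have c: "\<And>u v. ({u,v} = {a,b}) = ({v,u} = {a,b})" by (simp add: insert_commute)
    have fg: "fuzzy_graph V (\<lambda>_. 1) m"
    proof -
      have "m u v = m v u" for u v unfolding m_def using c[of u v] by presburger
      moreover have "0 \<le> m u v \<and> m u v \<le> 1" for u v unfolding m_def using assms(4,5) by simp
      ultimately show ?thesis unfolding fuzzy_graph_def by simp
    qed
    have se: "single_edge V m W" unfolding single_edge_def m_def using ab by auto
    note sq = single_sq[OF assms(1) se fg_symnn[OF fg]]
    have "fsigma V m \<le> fsigma V \<mu>" by (rule H[rule_format, OF conjI[OF fg sq(2)]])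
    hence "2 * W\<^sup>2 \<le> (\<Sum>v\<in>V. (fdeg V \<mu> v)\<^sup>2)" using cmp[OF sq(2)] sq(1) by simp
    moreover have "(\<Sum>v\<in>V. (fdeg V \<mu> v)\<^sup>2) \<le> 2 * W\<^sup>2" using sq_le[OF assms(1) S] assms(7) by simp
    ultimately have "(\<Sum>v\<in>V. (fdeg V \<mu> v)\<^sup>2) = 2 * (fsize V \<mu>)\<^sup>2" using assms(7) by simp
    from eq_single[OF assms(1) S _ this] assms show "single_edge V \<mu> W" by simp
  next
    assume se: "single_edge V \<mu> W"
    show "\<forall>\<nu>' \<mu>'. fuzzy_graph V \<nu>' \<mu>' \<and> fsize V \<mu>' = W \<longrightarrow> fsigma V \<mu>' \<le> fsigma V \<mu>"
    proof (intro allI impI)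
      fix \<nu>' \<mu>' assume h: "fuzzy_graph V \<nu>' \<mu>' \<and> fsize V \<mu>' = W"
      have "(\<Sum>v\<in>V. (fdeg V \<mu>' v)\<^sup>2) \<le> 2 * W\<^sup>2"
        using sq_le[OF assms(1) fg_symnn[of V \<nu>' \<mu>']] h by simp
      also have "\<dots> = (\<Sum>v\<in>V. (fdeg V \<mu> v)\<^sup>2)" using single_sq(1)[OF assms(1) se S] by simp
      finally show "fsigma V \<mu>' \<le> fsigma V \<mu>" using cmp[of \<mu>'] h by simp
    qed
  qed
qed

end
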